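(* Over any alphabet with at least $4$ letters, for every odd integer $\ell\ge3$ there exists a palindrome of length $\ell$ whose critical exponent is exactly $\tfrac32$.
   Context: A word $x=x[1..n]$ has period $q$ if $x[i]=x[i+q]$ for $1\le i\le n-q$. For integers $p>q\ge1$, $x$ is a $(p/q)$-power if it has length $p$ and period $q$. The exponent $\exp(w)$ of a finite nonempty word $w$ is the largest rational $p/q$ such that $w$ is a $(p/q)$-power. The critical exponent of $w$ is the maximum of $\exp(w')$ over all nonempty factors $w'$ of $w$. A palindrome is a word equal to its reversal. *)

theory Defs
  imports Complex_Main "HOL-Library.Sublist"
begin

definition has_period :: "'a list \<Rightarrow> nat \<Rightarrow> bool" where
  "has_period w q \<longleftrightarrow> (\<forall>i. i + q < length w \<longrightarrow> w ! i = w ! (i + q))"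

text \<open>Exponent of a nonempty word: the largest |w|/q over periods 1 <= q <= |w|
  (q = |w| is always a period, giving exponent 1).\<close>

definition word_exp :: "'a list \<Rightarrow> rat" where
  "word_exp w = Max {of_nat (length w) / of_nat q | q. 1 \<le> q \<and> q \<le> length w \<and> has_period w q}"

definition critical_exponent :: "'a list \<Rightarrow> rat" where
  "critical_exponent w = Max {word_exp u | u. sublist u w \<and> u \<noteq> []}"

definition palindrome :: "'a list \<Rightarrow> bool" where
  "palindrome w \<longleftrightarrow> rev w = w"

end

theory Submission
  imports Defs
begin


definition free :: "'b list \<Rightarrow> bool" where
  "free w \<longleftrightarrow> (\<forall>i n q. 0 < q \<and> 3*q < 2*n \<and> i + n \<le> length w \<longrightarrow>
      (\<exists>j. j + q < n \<and> w!(i+j) \<noteq> w!(i+j+q)))"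

lemma word_exp_le:
  assumes fr: "free w" and sub: "sublist u w" and ne: "u \<noteq> []"
  shows "word_exp u \<le> 3/2"
proof -
  obtain p s where w: "w = p @ u @ s" using sub unfolding sublist_def by blast
  let ?S = "{of_nat (length u) / of_nat q | q. 1 \<le> q \<and> q \<le> length u \<and> has_period u q} :: rat set"
  have fin: "finite ?S"
  proof -
    have "?S \<subseteq> (\<lambda>q. of_nat (length u) / of_nat q) ` {1..length u}" by auto
    thus ?thesis using finite_subset by blast
  qed
  have "has_period u (length u)" unfolding has_period_def by simp
  hence nemp: "?S \<noteq> {}" using ne by (cases u) auto
  have "y \<le> 3/2" if yS: "y \<in> ?S" for y
  proof -
    obtain q where q: "y = of_nat (length u) / of_nat q" "1 \<le> q" "q \<le> length u" "has_period u q"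
      using yS by blast
    have "2 * length u \<le> 3 * q"
    proof (rule ccontr)
      assume "\<not> ?thesis"
      hence "3*q < 2*length u" by simp
      moreover have "length p + length u \<le> length w" using w by simp
      ultimately obtain j where j: "j + q < length u" "w!(length p + j) \<noteq> w!(length p+j+q)"
        using fr q(2) unfolding free_def by (metis less_le_trans zero_less_one)
      have "w!(length p + j) = u!j" using w j(1) by (simp add: nth_append)
      moreover have "w!(length p + j + q) = u!(j+q)" using w j(1)
        by (simp add: nth_append add.assoc)
      ultimately show False using q(4) j unfolding has_period_def by auto
    qed
    hence "of_nat (2 * length u) \<le> (of_nat (3*q) :: rat)" by (simp only: of_nat_le_iff)
    hence "2 * of_nat (length u) \<le> 3 * (of_nat q :: rat)" by simp
    moreover have "(of_nat q :: rat) > 0" using q(2) by simp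
    ultimately show ?thesis using q(1) by (simp add: divide_le_eq)
  qed
  hence "\<forall>y\<in>?S. y \<le> 3/2" by blast
  thus ?thesis unfolding word_exp_def by (simp only: Max_le_iff[OF fin nemp])
qed

lemma crit:
  assumes fr: "free w" and sub: "sublist u w" and l3: "length u = 3" and eq: "u!0 = u!2"
  shows "critical_exponent w = 3/2"
proof -
  have ue: "word_exp u = 3/2"
  proof -
    let ?S = "{of_nat (length u) / of_nat q | q. 1 \<le> q \<and> q \<le> length u \<and> has_period u q} :: rat set"
    have fin: "finite ?S"
    proof -
      have "?S \<subseteq> (\<lambda>q. of_nat (length u) / of_nat q) ` {1..length u}" by auto
      thus ?thesis using finite_subset by blast
    qed
    have "has_period u 2" unfolding has_period_def using l3 eq
      by (auto simp: less_Suc_eq numeral_2_eq_2)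
    hence "3/2 \<in> ?S" using l3 by (auto intro!: exI[of _ 2])
    moreover have "\<And>y. y \<in> ?S \<Longrightarrow> y \<le> 3/2"
    proof -
      fix y assume "y \<in> ?S"
      moreover have une: "u \<noteq> []" using l3 by auto
      moreover have "Max ?S \<le> 3/2" using word_exp_le[OF fr sub une] unfolding word_exp_def .
      ultimately show "y \<le> 3/2" using fin by (meson Max_ge order_trans)
    qed
    ultimately show ?thesis unfolding word_exp_def by (intro Max_eqI[OF fin]) auto
  qed
  let ?C = "{word_exp u | u. sublist u w \<and> u \<noteq> []}"
  have "?C = word_exp ` {u. sublist u w \<and> u \<noteq> []}" by auto
  moreover have "finite {u. sublist u w \<and> u \<noteq> []}"
  proof -
    have "finite {u. sublist u w}" by (metis List.finite_set set_sublists_eq)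
    thus ?thesis by (rule finite_subset[rotated]) auto
  qed
  ultimately have fin: "finite ?C" by simp
  have "u \<noteq> []" using l3 by auto
  hence "3/2 \<in> ?C" using ue sub by force
  thus ?thesis unfolding critical_exponent_def
  proof (intro Max_eqI[OF fin])
    fix y assume "y \<in> ?C"
    then obtain v where "y = word_exp v" "sublist v w" "v \<noteq> []" by blast
    thus "y \<le> 3/2" using word_exp_le[OF fr] by blast
  qed
qed




definition G :: "nat list" where "G = [0,1,3,1,2,3,2,1,3,1,0]"
definition S :: "nat \<Rightarrow> nat \<Rightarrow> nat \<Rightarrow> nat" where
  "S x y u = (G ! (u mod 11) + (if u < 11 then x else y)) mod 4"
definition win :: "nat \<Rightarrow> nat \<Rightarrow> nat \<Rightarrow> nat list" where
  "win r x y = map (\<lambda>t. S x y (r+t)) [0..<4]"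
definition TAB :: "nat list" where "TAB = [0, 0, 0, 0, 0, 0, 0, 0, 0, 0, 0, 0, 0, 0, 0, 0, 0, 0, 0, 0, 0, 0, 10, 3, 0, 0, 0, 0, 0, 0, 0, 4, 0, 0, 0, 0, 0, 2, 10, 0, 0, 1, 0, 7, 0, 8, 8, 8, 0, 0, 0, 0, 0, 9, 10, 0, 0, 9, 6, 0, 0, 9, 5, 0]"
definition dec :: "nat list \<Rightarrow> nat" where
 "dec w = TAB ! (16 * ((w!1 + 4 - w!0) mod 4) + 4 * ((w!2 + 4 - w!1) mod 4) + ((w!3 + 4 - w!2) mod 4))"

lemma dec_check: "list_all (\<lambda>r. list_all (\<lambda>x. list_all (\<lambda>y. x = y \<or> dec (win r x y) = r) [0..<4]) [0..<4]) [0..<11]"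
  by code_simp

lemma dec_win: "r < 11 \<Longrightarrow> x < 4 \<Longrightarrow> y < 4 \<Longrightarrow> x \<noteq> y \<Longrightarrow> dec (win r x y) = r"
proof -
  assume a: "r < 11" "x < 4" "y < 4" "x \<noteq> y"
  have "\<forall>r\<in>{0..<11}. \<forall>x\<in>{0..<4}. \<forall>y\<in>{0..<4}. x = y \<or> dec (win r x y) = r"
    using dec_check by (simp add: list_all_iff)
  moreover have "r \<in> {0..<11}" "x \<in> {0..<4}" "y \<in> {0..<4}" using a by auto
  ultimately show ?thesis using a(4) by blast
qed

lemma short_check: "list_all (\<lambda>r. list_all (\<lambda>x. list_all (\<lambda>y. list_all (\<lambda>q.
   x = y \<or> list_ex (\<lambda>j. S x y (r+j) \<noteq> S x y (r+j+q)) [0..<(3*q div 2 + 1 - q)]) [1..<6]) [0..<4]) [0..<4]) [0..<11]"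
  by code_simp

lemma short: "r < 11 \<Longrightarrow> x < 4 \<Longrightarrow> y < 4 \<Longrightarrow> x \<noteq> y \<Longrightarrow> 1 \<le> q \<Longrightarrow> q < 6 \<Longrightarrow>
   \<exists>j. j < 3*q div 2 + 1 - q \<and> S x y (r+j) \<noteq> S x y (r+j+q)"
proof -
  assume a: "r < 11" "x < 4" "y < 4" "x \<noteq> y" "1 \<le> q" "q < 6"
  have "\<forall>r\<in>{0..<11}. \<forall>x\<in>{0..<4}. \<forall>y\<in>{0..<4}. \<forall>q\<in>{1..<6}. x = y \<or> (\<exists>j\<in>{0..<(3*q div 2 + 1 - q)}. S x y (r+j) \<noteq> S x y (r+j+q))"
    using short_check by (simp add: list_all_iff list_ex_iff Bex_def)
  moreover have "r \<in> {0..<11}" "x \<in> {0..<4}" "y \<in> {0..<4}" "q \<in> {1..<6}" using a by auto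
  ultimately have "\<exists>j\<in>{0..<(3*q div 2 + 1 - q)}. S x y (r+j) \<noteq> S x y (r+j+q)" using a(4) by blast
  thus ?thesis by auto
qed

definition hh :: "nat \<Rightarrow> nat list" where "hh a = map (\<lambda>c. (c + a) mod 4) G"
definition H :: "nat list \<Rightarrow> nat list" where "H w = concat (map hh w)"

lemma len_G[simp]: "length G = 11" by (simp add: G_def)
lemma len_hh[simp]: "length (hh a) = 11" by (simp add: hh_def G_def)
lemma len_H[simp]: "length (H w) = 11 * length w"
  by (induction w) (auto simp: H_def)

lemma nth_H: "i < 11 * length w \<Longrightarrow> H w ! i = (G ! (i mod 11) + w ! (i div 11)) mod 4"
proof (induction w arbitrary: i)
  case Nil then show ?case by simp
next
  case (Cons a w)
  have Hc: "H (a # w) = hh a @ H w" by (simp add: H_def)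
  show ?case
  proof (cases "i < 11")
    case True
    then show ?thesis unfolding Hc by (simp add: nth_append hh_def)
  next
    case False
    hence "i - 11 < 11 * length w" using Cons.prems by simp
    from Cons.IH[OF this] have "H w ! (i - 11) = (G ! ((i-11) mod 11) + w ! ((i-11) div 11)) mod 4" .
    moreover have "(i-11) mod 11 = i mod 11" using False by (simp add: mod_if)
    moreover have "i div 11 = Suc ((i - 11) div 11)" using False by (simp add: div_if)
    ultimately show ?thesis unfolding Hc using False by (simp add: nth_append)
  qed
qed




lemma noaa: "free w \<Longrightarrow> b + 1 < length w \<Longrightarrow> w!b \<noteq> w!(b+1)"
  unfolding free_def
  by (erule allE[of _ b], erule allE[of _ 2], erule allE[of _ 1]) auto

lemma dm11: "(c::nat) < 11 \<Longrightarrow> (11*b + c) mod 11 = c \<and> (11*b + c) div 11 = b"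
  by (metis add.commute add_cancel_right_left div_less div_mult_self2 mod_less mod_mult_self2 zero_neq_numeral)


lemma m_aux: "(a::nat) \<le> b \<Longrightarrow> (g + a) mod k = (g + b) mod k \<Longrightarrow> b - a < k \<Longrightarrow> a = b"
proof -
  assume a: "a \<le> b" "(g + a) mod k = (g + b) mod k" "b - a < k"
  have "k dvd (g + b) - (g + a)" using a(1,2) mod_eq_dvd_iff_nat by (metis add_le_cancel_left)
  hence d: "k dvd b - a" by simp
  show "a = b"
  proof (rule ccontr)
    assume "a \<noteq> b"
    hence "0 < b - a" using a(1) by simp
    from dvd_imp_le[OF d this] show False using a(3) by simp
  qed
qed
lemma m4: "(g + x) mod 4 = (g + y) mod (4::nat) \<Longrightarrow> x < 4 \<Longrightarrow> y < 4 \<Longrightarrow> x = y"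
proof -
  assume a: "(g + x) mod 4 = (g + y) mod (4::nat)" "x < 4" "y < 4"
  show "x = y"
  proof (cases "x \<le> y")
    case True thus ?thesis using m_aux[OF True a(1)] a by simp
  next
    case False thus ?thesis using m_aux[of y x g 4] a(1)[symmetric] a(2,3) by linarith
  qed
qed
lemma m11: "(i + q) mod 11 = i mod (11::nat) \<Longrightarrow> q mod 11 = 0"
proof -
  assume a: "(i + q) mod 11 = i mod (11::nat)"
  have "i \<le> i + q" by simp
  from mod_eq_dvd_iff_nat[OF this, of 11] a have "11 dvd (i + q) - i" by simp
  thus ?thesis by simp
qed

lemma loc:
  assumes fr: "free w" and lt: "set w \<subseteq> {..<4}" and i: "i < 11 * length w"
  shows "\<exists>x y. x < 4 \<and> y < 4 \<and> x \<noteq> y \<and>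
    (\<forall>k. i mod 11 + k < 22 \<longrightarrow> i + k < 11 * length w \<longrightarrow> H w ! (i+k) = S x y (i mod 11 + k))"
proof -
  define b where "b = i div 11"
  define r where "r = i mod 11"
  define x where "x = w!b"
  define y where "y = (if b+1 < length w then w!(b+1) else (x+1) mod 4)"
  have ib: "i = 11*b + r" "r < 11" unfolding b_def r_def by auto
  have bl: "b < length w" using i ib by linarith
  have x4: "x < 4" using lt bl unfolding x_def by (meson lessThan_iff nth_mem subsetD)
  have y4: "y < 4" using lt x4 unfolding y_def by (auto intro: nth_mem[THEN subsetD[OF lt, THEN lessThan_iff[THEN iffD1]]])
  have xy: "x \<noteq> y" unfolding y_def using noaa[OF fr] x4 unfolding x_def by (auto simp: mod_Suc)
  have "H w ! (i+k) = S x y (r + k)" if k: "r + k < 22" "i + k < 11 * length w" for k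
  proof (cases "r + k < 11")
    case True
    have e: "i + k = 11*b + (r+k)" using ib by simp
    have "(i+k) mod 11 = r + k" "(i+k) div 11 = b" unfolding e using dm11[OF True] by auto
    thus ?thesis using nth_H[OF k(2)] True unfolding S_def x_def by simp
  next
    case False
    have e: "i + k = 11*(b+1) + (r+k-11)" using ib False by simp
    have "r + k - 11 < 11" using k(1) by simp
    from dm11[OF this, of "b+1"] have "(i+k) mod 11 = r + k - 11" "(i+k) div 11 = b + 1"
      unfolding e by auto
    moreover have "b + 1 < length w"
    proof (rule ccontr)
      assume "\<not> b + 1 < length w"
      hence "11 * length w \<le> 11 * (b+1)" by simp
      thus False using k(2) e by linarith
    qed
    moreover have "(r+k) mod 11 = r + k - 11" using False k(1) by (simp add: mod_if)
    ultimately show ?thesis using nth_H[OF k(2)] False unfolding S_def y_def by simp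
  qed
  thus ?thesis using x4 y4 xy unfolding r_def by blast
qed

lemma divb: "11 * ((x::nat) div 11) \<le> x" "x < 11 * (x div 11) + 11"
  by (simp_all add: mult.commute)

lemma ar: "(n::nat) - q \<le> 11*D \<Longrightarrow> 3*q < 2*n \<Longrightarrow> q = 11*p \<Longrightarrow> q < n \<Longrightarrow> 3*p < 2*(D+p)"
proof -
  assume a: "(n::nat) - q \<le> 11*D" "3*q < 2*n" "q = 11*p" "q < n"
  have "n \<le> 11*D + q" using a(1,4) by linarith
  moreover have "33*p < 2*n" using a(2,3) by simp
  ultimately have "n \<le> 11*D + 11*p" "33*p < 2*n" using a(3) by simp_all
  hence "11 * p < 11 * (2 * D)" by linarith
  hence "p < 2 * D" by simp
  thus ?thesis by simp
qed

lemma free_H: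
  assumes fr: "free w" and lt: "set w \<subseteq> {..<4}"
  shows "free (H w)"
  unfolding free_def
proof (intro allI impI)
  fix i n q
  assume a: "0 < q \<and> 3 * q < 2 * n \<and> i + n \<le> length (H w)"
  hence q0: "0 < q" and qn: "3*q < 2*n" and inl: "i + n \<le> 11 * length w" by auto
  show "\<exists>j. j + q < n \<and> H w ! (i + j) \<noteq> H w ! (i + j + q)"
  proof (rule ccontr)
    assume "\<not> ?thesis"
    hence P: "\<And>j. j + q < n \<Longrightarrow> H w ! (i + j) = H w ! (i + j + q)" by blast
    have il: "i < 11 * length w" using inl qn by linarith
    have w4: "\<And>b. b < length w \<Longrightarrow> w ! b < 4" using lt by (meson lessThan_iff nth_mem subsetD)
    show False
    proof (cases "q mod 11 = 0")
      case True
      then obtain p where qp: "q = 11 * p" by blast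
      have p0: "0 < p" using q0 qp by simp
      define B1 where "B1 = i div 11"
      define B2 where "B2 = (i + n - q - 1) div 11"
      have nq: "q < n" using qn by linarith
      have d1: "11 * B1 \<le> i" "i < 11 * B1 + 11" unfolding B1_def using divb by auto
      have d2: "11 * B2 \<le> i + n - q - 1" "i + n - q - 1 < 11 * B2 + 11" unfolding B2_def using divb by auto
      have eqb: "w ! b = w ! (b + p)" if b: "B1 \<le> b" "b \<le> B2" for b
      proof -
        define t where "t = max i (11 * b)"
        have tdiv: "t = 11 * b + t mod 11 \<and> t mod 11 < 11"
        proof (cases "11 * b \<le> i")
          case True
          hence "b = B1" using b(1) d1 by linarith
          thus ?thesis unfolding t_def using True d1 B1_def by (simp add: max_def) 
        next
          case False
          thus ?thesis unfolding t_def by (simp add: max_def)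
        qed
        have ti: "i \<le> t" "t \<le> i + n - q - 1" unfolding t_def using d2 b nq by auto
        hence jq: "(t - i) + q < n" using nq by linarith
        from P[OF jq] have e: "H w ! t = H w ! (t + q)" using ti by simp
        have tq: "t + q < 11 * length w" using ti inl nq by linarith
        have tl: "t < 11 * length w" using tq by linarith
        have m1: "t mod 11 < 11" using tdiv by simp
        have tt: "t = 11*b + t mod 11" using tdiv by blast
        have "t div 11 = b" using arg_cong[OF tt, of "\<lambda>z. z div 11"] dm11[OF m1, of b] by simp
        moreover have "(t + q) div 11 = b + p \<and> (t+q) mod 11 = t mod 11"
        proof -
          have "t + q = 11 * (b + p) + t mod 11" using tdiv qp by (simp add: algebra_simps)
          thus ?thesis using dm11[OF m1, of "b+p"] by simp
        qed
        ultimately have "(G ! (t mod 11) + w ! b) mod 4 = (G ! (t mod 11) + w ! (b + p)) mod 4"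
          using e nth_H[OF tl] nth_H[OF tq] by simp
        moreover have "b + p < length w"
        proof -
          have "11 * (b + p) \<le> t + q" using tdiv qp by (simp add: algebra_simps)
          hence "11 * (b + p) < 11 * length w" using tq by linarith
          thus ?thesis by simp
        qed
        ultimately show ?thesis using m4[OF _ w4 w4] \<open>b + p < length w\<close> by simp
      qed
      have "B1 \<le> B2" using d1 d2 nq by linarith
      have ex: "11 * (B2 - B1 + 1) = 11 * B2 - 11 * B1 + 11" using \<open>B1 \<le> B2\<close> by (simp add: algebra_simps)
      have sz: "11 * (B2 - B1 + 1) \<ge> n - q" unfolding ex using d1 d2 nq by linarith
      have n'len: "B1 + (B2 - B1 + 1 + p) \<le> length w"
      proof -
        have "11 * (B2 + p) = 11 * B2 + q" using qp by simp
        hence "11 * (B2 + p) < 11 * length w" using d2 inl nq by linarith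
        thus ?thesis using \<open>B1 \<le> B2\<close> by simp
      qed
      have n'bad: "3 * p < 2 * (B2 - B1 + 1 + p)" using ar[OF sz qn qp nq] .
      obtain j where j: "j + p < B2 - B1 + 1 + p" "w ! (B1 + j) \<noteq> w ! (B1 + j + p)"
        using fr p0 n'bad n'len unfolding free_def by blast
      thus False using eqb[of "B1 + j"] \<open>B1 \<le> B2\<close> by simp
    next
      case False
      obtain x y where xy: "x < 4" "y < 4" "x \<noteq> y"
        and L: "\<And>k. i mod 11 + k < 22 \<Longrightarrow> i + k < 11 * length w \<Longrightarrow> H w ! (i+k) = S x y (i mod 11 + k)"
        using loc[OF fr lt il] by blast
      show False
      proof (cases "q + 4 \<le> n")
        case True
        have iql: "i + q < 11 * length w" using True inl by linarith
        obtain x' y' where xy': "x' < 4" "y' < 4" "x' \<noteq> y'"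
          and L': "\<And>k. (i+q) mod 11 + k < 22 \<Longrightarrow> i + q + k < 11 * length w \<Longrightarrow> H w ! (i+q+k) = S x' y' ((i+q) mod 11 + k)"
          using loc[OF fr lt iql] by blast
        have "win (i mod 11) x y = win ((i+q) mod 11) x' y'"
          unfolding win_def
        proof (rule map_cong[OF refl])
          fix t assume "t \<in> set [0..<4]"
          hence t: "t < 4" by simp
          have "S x y (i mod 11 + t) = H w ! (i + t)" using L[of t] t inl True by simp
          also have "\<dots> = H w ! (i + t + q)" using P[of t] t True by simp
          also have "\<dots> = S x' y' ((i+q) mod 11 + t)" using L'[of t] t inl True by (simp add: add.commute add.left_commute)
          finally show "S x y (i mod 11 + t) = S x' y' ((i+q) mod 11 + t)" .
        qed
        moreover have "dec (win (i mod 11) x y) = i mod 11" by (rule dec_win) (use xy in auto)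
        moreover have "dec (win ((i+q) mod 11) x' y') = (i+q) mod 11" by (rule dec_win) (use xy' in auto)
        ultimately have "(i+q) mod 11 = i mod 11" by simp
        from m11[OF this] show False using \<open>q mod 11 \<noteq> 0\<close> by simp
      next
        case False
        hence q6: "q < 6" using qn by linarith
        obtain j where j: "j < 3*q div 2 + 1 - q" "S x y (i mod 11 + j) \<noteq> S x y (i mod 11 + j + q)"
          using short[of "i mod 11" x y q] xy q0 q6 by auto
        have n0: "3*q div 2 + 1 \<le> n" using qn by linarith
        have jq: "j + q < n" using j(1) n0 by linarith
        have im: "i mod 11 < 11" by simp
        have jn: "j + q < 8" using j(1) q6 by linarith
        have "H w ! (i + j) = S x y (i mod 11 + j)" using L[of j] jq inl im jn by simp
        moreover have "H w ! (i + (j + q)) = S x y (i mod 11 + (j + q))" using L[of "j+q"] jq inl im jn by simp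
        ultimately show False using P[OF jq] j(2) by (simp add: add.assoc)
      qed
    qed
  qed
qed




lemma free_single: "free [a]"
  unfolding free_def by auto

lemma set_H: "set (H w) \<subseteq> {..<4}"
  by (auto simp: H_def hh_def)

lemma rev_hh: "rev (hh a) = hh a"
  by (simp add: hh_def rev_map G_def)

lemma pal_H: "rev w = w \<Longrightarrow> rev (H w) = H w"
proof -
  assume r: "rev w = w"
  have "rev (H w) = concat (map rev (rev (map hh w)))" by (simp add: H_def rev_concat)
  also have "\<dots> = concat (map hh (rev w))" by (simp add: rev_map comp_def rev_hh)
  also have "\<dots> = H w" using r by (simp add: H_def)
  finally show ?thesis .
qed

lemma iter: "free ((H ^^ k) [0]) \<and> set ((H ^^ k) [0]) \<subseteq> {..<4} \<and> rev ((H ^^ k) [0]) = (H ^^ k) [0]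
   \<and> length ((H ^^ k) [0]) = 11 ^ k"
proof (induction k)
  case 0 then show ?case using free_single by simp
next
  case (Suc k)
  then show ?case using free_H set_H pal_H by simp
qed

lemma free_factor:
  assumes fr: "free w" and dl: "d + l \<le> length w"
  shows "free (take l (drop d w))"
  unfolding free_def
proof (intro allI impI)
  fix i n q
  assume a: "0 < q \<and> 3 * q < 2 * n \<and> i + n \<le> length (take l (drop d w))"
  hence "d + i + n \<le> length w" "i + n \<le> l" using dl by auto
  with a fr obtain j where j: "j + q < n" "w ! (d + i + j) \<noteq> w ! (d + i + j + q)"
    unfolding free_def by blast
  have "take l (drop d w) ! (i + j) = w ! (d + i + j)" using j(1) \<open>i + n \<le> l\<close> dl
    by (simp add: add.assoc)
  moreover have "take l (drop d w) ! (i + j + q) = w ! (d + i + j + q)" using j(1) \<open>i + n \<le> l\<close> dl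
    by (simp add: add.assoc)
  ultimately show "\<exists>j. j + q < n \<and> take l (drop d w) ! (i + j) \<noteq> take l (drop d w) ! (i + j + q)"
    using j by metis
qed

lemma free_map:
  assumes fr: "free w" and inj: "inj_on f (set w)"
  shows "free (map f w)"
  unfolding free_def
proof (intro allI impI)
  fix i n q
  assume a: "0 < q \<and> 3 * q < 2 * n \<and> i + n \<le> length (map f w)"
  hence "0 < q" "3 * q < 2 * n" "i + n \<le> length w" by auto
  with fr obtain j where j: "j + q < n" "w ! (i + j) \<noteq> w ! (i + j + q)"
    unfolding free_def by blast
  have l: "i + j < length w" "i + j + q < length w" using a j by auto
  hence "f (w ! (i + j)) \<noteq> f (w ! (i + j + q))" using j(2) inj by (meson inj_on_eq_iff nth_mem)
  thus "\<exists>j. j + q < n \<and> map f w ! (i + j) \<noteq> map f w ! (i + j + q)" using j(1) l by auto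
qed

lemma pal_factor:
  assumes r: "rev W = W" and N: "length W = 2*d + l"
  shows "rev (take l (drop d W)) = take l (drop d W)"
proof (rule nth_equalityI)
  show "length (rev (take l (drop d W))) = length (take l (drop d W))" by simp
next
  fix m assume "m < length (rev (take l (drop d W)))"
  hence m: "m < l" using N by simp
  have "rev (take l (drop d W)) ! m = take l (drop d W) ! (l - Suc m)"
    using m N by (simp add: rev_nth)
  also have "\<dots> = W ! (d + (l - Suc m))" using m N by simp
  also have "\<dots> = rev W ! (d + (l - Suc m))" using r by simp
  also have "\<dots> = W ! (length W - Suc (d + (l - Suc m)))" using m N by (simp add: rev_nth)
  also have "length W - Suc (d + (l - Suc m)) = d + m" using m N by simp
  also have "W ! (d + m) = take l (drop d W) ! m" using m N by simp
  finally show "rev (take l (drop d W)) ! m = take l (drop d W) ! m" .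
qed

lemma le_pow11: "l \<le> (11::nat) ^ l"
proof (induction l)
  case 0 then show ?case by simp
next
  case (Suc l)
  have "1 \<le> (11::nat) ^ l" by simp
  moreover have "(11::nat) ^ Suc l = 11 * 11 ^ l" by simp
  ultimately show ?case using Suc by linarith
qed




theorem mainTheorem7:
  fixes \<Sigma> :: "'a set" and l :: nat
  assumes "finite \<Sigma>" and "card \<Sigma> \<ge> 4" and "odd l" and "l \<ge> 3"
  shows "\<exists>w. set w \<subseteq> \<Sigma> \<and> length w = l \<and> palindrome w \<and> critical_exponent w = 3/2"
proof -
  obtain f where f: "f ` {..<4::nat} \<subseteq> \<Sigma>" "inj_on f {..<4::nat}"
    using card_le_inj[of "{..<4::nat}" \<Sigma>] assms(1,2) by auto
  define W where "W = (H ^^ l) [0]"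
  have Wp: "free W" "set W \<subseteq> {..<4}" "rev W = W" "length W = 11 ^ l"
    using iter[of l] unfolding W_def by auto
  have oddN: "odd (length W)" using Wp(4) by simp
  have lN: "l \<le> length W" using Wp(4) le_pow11 by simp
  define d where "d = (length W - l) div 2"
  have ev: "even (length W - l)" using oddN assms(3) lN by (simp add: even_diff_nat)
  have "2 * d = length W - l" unfolding d_def using ev by simp
  hence N: "length W = 2 * d + l" using lN by linarith
  define u where "u = take l (drop d W)"
  have ul: "length u = l" unfolding u_def using N by simp
  have uf: "free u" unfolding u_def by (rule free_factor[OF Wp(1)]) (use N in simp)
  have ur: "rev u = u" unfolding u_def by (rule pal_factor[OF Wp(3) N])
  have us: "set u \<subseteq> {..<4}" unfolding u_def using Wp(2) by (meson in_set_dropD in_set_takeD subset_iff)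
  define v where "v = map f u"
  have vs: "set v \<subseteq> \<Sigma>" unfolding v_def using us f(1) by auto
  have vl: "length v = l" unfolding v_def using ul by simp
  have vr: "rev v = v" unfolding v_def using ur by (metis rev_map)
  have vf: "free v" unfolding v_def by (rule free_map[OF uf]) (use f(2) us in \<open>rule inj_on_subset\<close>)
  obtain c where c: "l = 2 * c + 1" using assms(3) by (metis oddE)
  have c1: "1 \<le> c" using c assms(4) by simp
  define t where "t = take 3 (drop (c - 1) v)"
  have tl: "length t = 3" unfolding t_def using vl c c1 by simp
  have "v ! (c - 1) = rev v ! (c - 1)" using vr by simp
  also have "\<dots> = v ! (c + 1)" using vl c c1 by (simp add: rev_nth)
  finally have e: "v ! (c - 1) = v ! (c + 1)" .
  have "t ! 0 = v ! (c - 1)" unfolding t_def using vl c c1 by simp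
  moreover have "t ! 2 = v ! (c + 1)" unfolding t_def using vl c c1 by simp
  ultimately have t02: "t ! 0 = t ! 2" using e by simp
  have "sublist t v" unfolding t_def by (metis sublist_drop sublist_take sublist_order.order.trans)
  hence "critical_exponent v = 3/2" using crit[OF vf _ tl t02] by simp
  thus ?thesis using vs vl vr unfolding palindrome_def by blast
qed


end
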